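(* Setting and construction as in the context. Assume $g$ is convex and Lipschitz continuous. Then $\underline{v}$ is a continuous viscosity subsolution of $-v_t(t,x)+H(t,x,\nabla v(t,x))=0$ on $(0,T)\times\mathbb{R}^n$, where $H(t,x,p)=\max_{u\in\mathbb{U}}\min_{d\in\mathbb{D}}\langle -p,A(t)x+B(t)u+E(t)d\rangle$.
   Context: Fix $T>0$, integers $n,m,\ell\ge1$, $A\in C([0,T];\mathbb{R}^{n\times n})$, $B\in C([0,T];\mathbb{R}^{n\times m})$, $E\in C([0,T];\mathbb{R}^{n\times\ell})$, compact convex nonempty $\mathbb{U}\subset\mathbb{R}^m$, $\mathbb{D}\subset\mathbb{R}^\ell$, and $g\in C(\mathbb{R}^n;\mathbb{R})$. $D^-g(\bar x)$ is the set of $p\in\mathbb{R}^n$ with $\liminf_{x\to\bar x}\frac{g(x)-g(\bar x)-\langle p,x-\bar x\rangle}{\|x-\bar x\|}\ge0$. Construction: $N\in\mathbb{N}$, levels $\gamma_1,\dots,\gamma_N\in g(\mathbb{R}^n)$, $n_k\in\mathbb{N}$, points $\bar x_{i,k}\in g^{-1}(\{\gamma_k\})$ and $p_{i,k}\in D^-g(\bar x_{i,k})$; $(\lambda_{i,k},q_{i,k})$ is the solution on $[0,T]$ of $\dot\lambda(s)=-A(s)'\lambda(s)$, $\dot q(s)=\max_{u\in\mathbb{U}}\min_{d\in\mathbb{D}}\langle-\lambda(s),B(s)u+E(s)d\rangle$, with $\lambda_{i,k}(T)=p_{i,k}$, $q_{i,k}(T)=-\langle p_{i,k},\bar x_{i,k}\rangle+\gamma_k$;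 and $\underline{v}(t,x)=\max_{k}\max_{i}\big(\langle\lambda_{i,k}(t),x\rangle+q_{i,k}(t)\big)$. For continuous $f$ and $(t_0,x_0)\in(0,T)\times\mathbb{R}^n$, $D^+f(t_0,x_0)$ is the set of $(q,p)\in\mathbb{R}\times\mathbb{R}^n$ with $\limsup_{(t,x)\to(t_0,x_0)}\frac{f(t,x)-f(t_0,x_0)-\langle(q,p),(t,x)-(t_0,x_0)\rangle}{\|(t,x)-(t_0,x_0)\|}\le0$; $f$ is a viscosity subsolution if $-q+H(t_0,x_0,p)\le 0$ for all such $(t_0,x_0)$ and $(q,p)\in D^+f(t_0,x_0)$. *)

theory Defs
  imports "HOL-Analysis.Analysis"
begin

definition subdiff_lower :: "('a::real_inner \<Rightarrow> real) \<Rightarrow> 'a \<Rightarrow> 'a set" where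
  "subdiff_lower g xb = {p. Liminf (at xb)
      (\<lambda>x. ereal ((g x - g xb - inner p (x - xb)) / norm (x - xb))) \<ge> 0}"

definition superdiff_upper :: "('a::real_inner \<Rightarrow> real) \<Rightarrow> 'a \<Rightarrow> 'a set" where
  "superdiff_upper f z0 = {w. Limsup (at z0)
      (\<lambda>z. ereal ((f z - f z0 - inner w (z - z0)) / norm (z - z0))) \<le> 0}"

text \<open>Hamiltonian H(t,x,p) = max_{u in U} min_{d in D} <-p, A(t)x + B(t)u + E(t)d>
  (max/min over compact nonempty sets written as SUP/INF, which are attained).\<close>
definition hamiltonian ::
  "(real \<Rightarrow> real^'n^'n) \<Rightarrow> (real \<Rightarrow> real^'m^'n) \<Rightarrow> (real \<Rightarrow> real^'l^'n) \<Rightarrow>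
   (real^'m) set \<Rightarrow> (real^'l) set \<Rightarrow> real \<Rightarrow> real^'n \<Rightarrow> real^'n \<Rightarrow> real" where
  "hamiltonian A B E U D t x p =
     (SUP u\<in>U. INF d\<in>D. inner (- p) (A t *v x + B t *v u + E t *v d))"

definition viscosity_subsolution ::
  "real \<Rightarrow> (real \<Rightarrow> 'a::real_inner \<Rightarrow> 'a \<Rightarrow> real) \<Rightarrow> (real \<Rightarrow> 'a \<Rightarrow> real) \<Rightarrow> bool" where
  "viscosity_subsolution T H f \<longleftrightarrow>
     continuous_on ({0<..<T} \<times> UNIV) (\<lambda>(t,x). f t x) \<and>
     (\<forall>t0\<in>{0<..<T}. \<forall>x0. \<forall>(q,p)\<in>superdiff_upper (\<lambda>(t,x). f t x) (t0,x0).
        - q + H t0 x0 p \<le> 0)"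

end

theory Submission imports Defs begin
lemma super_eq_grad:
  fixes f \<phi> :: "'a::real_inner \<Rightarrow> real"
  assumes der: "(\<phi> has_derivative (\<lambda>h. inner g h)) (at z0)"
    and le: "\<And>z. \<phi> z \<le> f z" and eq: "\<phi> z0 = f z0"
    and w: "w \<in> superdiff_upper f z0"
  shows "w = g"
proof (rule ccontr)
  assume "w \<noteq> g"
  define e where "e = g - w"
  have ne: "norm e > 0" using \<open>w \<noteq> g\<close> unfolding e_def by simp
  define \<epsilon> where "\<epsilon> = norm e / 4"
  have epos: "\<epsilon> > 0" using ne unfolding \<epsilon>_def by simp
  have "Limsup (at z0) (\<lambda>z. ereal ((f z - f z0 - inner w (z - z0)) / norm (z - z0))) < ereal \<epsilon>"
    using w epos unfolding superdiff_upper_def by (simp add: le_less_trans)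
  from Limsup_lessD[OF this] have "\<forall>\<^sub>F z in at z0. (f z - f z0 - inner w (z - z0)) / norm (z - z0) < \<epsilon>"
    by simp
  then obtain d2 where d2: "d2 > 0" "\<And>y. y \<noteq> z0 \<Longrightarrow> dist y z0 < d2 \<Longrightarrow> (f y - f z0 - inner w (y - z0)) / norm (y - z0) < \<epsilon>"
    unfolding eventually_at by blast
  from der epos obtain d where d: "d > 0" "\<And>y. norm (y - z0) < d \<Longrightarrow> norm (\<phi> y - \<phi> z0 - inner g (y - z0)) \<le> \<epsilon> * norm (y - z0)"
    unfolding has_derivative_within_alt by blast
  define s where "s = min d d2 / 2"
  have spos: "s > 0" "s < d" "s < d2" using d d2 unfolding s_def by auto
  define y where "y = z0 + (s / norm e) *\<^sub>R e"
  have yz: "y - z0 = (s / norm e) *\<^sub>R e" unfolding y_def by simp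
  have ny: "norm (y - z0) = s" using ne spos unfolding yz by simp
  have iy: "inner e (y - z0) = s * norm e" using ne unfolding yz
    by (simp add: power2_norm_eq_inner[symmetric] power2_eq_square)
  have "y \<noteq> z0" using ny spos by auto
  hence q1: "f y - f z0 - inner w (y - z0) < \<epsilon> * s"
    using d2(2)[of y] ny spos by (simp add: dist_norm divide_less_eq)
  have q2: "\<phi> y - \<phi> z0 - inner g (y - z0) \<ge> - (\<epsilon> * s)"
    using d(2)[of y] ny spos by (simp add: abs_le_iff)
  have "inner e (y - z0) < 2 * \<epsilon> * s"
    using q1 q2 le[of y] eq unfolding e_def by (simp add: inner_diff_left)
  thus False using iy spos ne unfolding \<epsilon>_def by simp
qed

lemma deriv_phi:
  fixes l :: "real \<Rightarrow> 'a::real_inner" and qf :: "real \<Rightarrow> real"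
  assumes l: "(l has_vector_derivative L) (at t0)" and qd: "(qf has_real_derivative Q) (at t0)"
  shows "((\<lambda>z. inner (l (fst z)) (snd z) + qf (fst z)) has_derivative (\<lambda>h. inner (Q + inner L x0, l t0) h)) (at (t0,x0))"
proof -
  have l0: "(l has_derivative (\<lambda>s. s *\<^sub>R L)) (at (fst (t0,x0)))"
    using l by (simp add: has_vector_derivative_def)
  have q0: "(qf has_derivative (\<lambda>s. s * Q)) (at (fst (t0,x0)))"
    using qd unfolding has_field_derivative_def by (simp add: mult.commute[of _ Q])
  have l1: "((\<lambda>z. l (fst z)) has_derivative (\<lambda>h. fst h *\<^sub>R L)) (at (t0,x0))"
    using has_derivative_compose[OF has_derivative_fst[OF has_derivative_ident] l0]
    by simp
  have q1: "((\<lambda>z. qf (fst z)) has_derivative (\<lambda>h. fst h * Q)) (at (t0,x0))"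
    using has_derivative_compose[OF has_derivative_fst[OF has_derivative_ident] q0]
    by (simp add: mult.commute)
  have "((\<lambda>z. inner (l (fst z)) (snd z) + qf (fst z)) has_derivative
      (\<lambda>h. inner (l t0) (snd h) + inner (fst h *\<^sub>R L) x0 + fst h * Q)) (at (t0,x0))"
    using has_derivative_add[OF has_derivative_inner[OF l1 has_derivative_snd[OF has_derivative_ident]] q1]
    by simp
  moreover have "(\<lambda>h. inner (l t0) (snd h) + inner (fst h *\<^sub>R L) x0 + fst h * Q) = (\<lambda>h. inner (Q + inner L x0, l t0) h)"
    by (auto simp: inner_Pair algebra_simps inner_prod_def)
  ultimately show ?thesis by simp
qed
lemma INF_shift:
  fixes f :: "'b \<Rightarrow> real"
  assumes "D \<noteq> {}" "bdd_below (f ` D)"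
  shows "(INF d\<in>D. c + f d) = c + (INF d\<in>D. f d)"
proof (rule antisym)
  have bb: "bdd_below ((\<lambda>d. c + f d) ` D)"
    using assms(2) unfolding bdd_below_def by (auto intro: add_left_mono)
  have "(INF d\<in>D. c + f d) - c \<le> (INF d\<in>D. f d)"
    using assms(1) by (rule cINF_greatest) (smt (verit) bb cINF_lower)
  thus "(INF d\<in>D. c + f d) \<le> c + (INF d\<in>D. f d)" by simp
  show "c + (INF d\<in>D. f d) \<le> (INF d\<in>D. c + f d)"
    using assms(1) by (rule cINF_greatest) (simp add: assms(2) cINF_lower)
qed

lemma SUP_shift:
  fixes f :: "'b \<Rightarrow> real"
  assumes "D \<noteq> {}" "bdd_above (f ` D)"
  shows "(SUP d\<in>D. c + f d) = c + (SUP d\<in>D. f d)"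
proof (rule antisym)
  have bb: "bdd_above ((\<lambda>d. c + f d) ` D)"
    using assms(2) unfolding bdd_above_def by (auto intro: add_left_mono)
  have "(SUP d\<in>D. f d) \<le> (SUP d\<in>D. c + f d) - c"
    using assms(1) by (rule cSUP_least) (smt (verit) bb cSUP_upper)
  thus "c + (SUP d\<in>D. f d) \<le> (SUP d\<in>D. c + f d)" by simp
  show "(SUP d\<in>D. c + f d) \<le> c + (SUP d\<in>D. f d)"
    using assms(1) by (rule cSUP_least) (simp add: assms(2) cSUP_upper)
qed

lemma ham_eq:
  fixes A :: "real \<Rightarrow> real^'n^'n" and B :: "real \<Rightarrow> real^'m^'n" and E :: "real \<Rightarrow> real^'l^'n"
  assumes U: "compact U" "U \<noteq> {}" and D: "compact D" "D \<noteq> {}"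
  shows "hamiltonian A B E U D t x pv = - inner pv (A t *v x) + (SUP u\<in>U. INF d\<in>D. inner (- pv) (B t *v u + E t *v d))"
proof -
  have cont: "continuous_on S (\<lambda>d. inner (- pv) (B t *v u + E t *v d))" for S u
    by (intro continuous_intros)
  have bbD: "bdd_below ((\<lambda>d. inner (- pv) (B t *v u + E t *v d)) ` D)" for u
    by (rule bounded_imp_bdd_below, rule compact_imp_bounded, rule compact_continuous_image[OF cont D(1)])
  obtain d0 where d0: "d0 \<in> D" using D by auto
  have contU: "continuous_on U (\<lambda>u. inner (- pv) (B t *v u + E t *v d0))"
    by (intro continuous_intros)
  have bU: "bdd_above ((\<lambda>u. inner (- pv) (B t *v u + E t *v d0)) ` U)"
    by (rule bounded_imp_bdd_above, rule compact_imp_bounded, rule compact_continuous_image[OF contU U(1)])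
  have bbU: "bdd_above ((\<lambda>u. INF d\<in>D. inner (- pv) (B t *v u + E t *v d)) ` U)"
  proof -
    from bU obtain M where M: "\<And>u. u \<in> U \<Longrightarrow> inner (- pv) (B t *v u + E t *v d0) \<le> M"
      unfolding bdd_above_def by auto
    have "(INF d\<in>D. inner (- pv) (B t *v u + E t *v d)) \<le> M" if "u \<in> U" for u
      using cINF_lower[OF bbD d0, of u] M[OF that] by linarith
    thus ?thesis unfolding bdd_above_def by auto
  qed
  have "hamiltonian A B E U D t x pv = (SUP u\<in>U. INF d\<in>D. - inner pv (A t *v x) + inner (- pv) (B t *v u + E t *v d))"
    unfolding hamiltonian_def by (simp add: inner_add_right add.assoc)
  also have "\<dots> = (SUP u\<in>U. - inner pv (A t *v x) + (INF d\<in>D. inner (- pv) (B t *v u + E t *v d)))"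
    using INF_shift[OF D(2) bbD] by simp
  also have "\<dots> = - inner pv (A t *v x) + (SUP u\<in>U. INF d\<in>D. inner (- pv) (B t *v u + E t *v d))"
    by (rule SUP_shift[OF U(2) bbU])
  finally show ?thesis .
qed

lemma isCont_Max:
  fixes f :: "'b \<Rightarrow> 'a::metric_space \<Rightarrow> real"
  assumes "finite J" "J \<noteq> {}" "\<And>j. j \<in> J \<Longrightarrow> isCont (f j) z"
  shows "isCont (\<lambda>z. Max ((\<lambda>j. f j z) ` J)) z"
  using assms
proof (induction J rule: finite_ne_induct)
  case (singleton x)
  then show ?case by simp
next
  case (insert x F)
  have "isCont (\<lambda>z. max (f x z) (Max ((\<lambda>j. f j z) ` F))) z"
    using insert by (intro continuous_max) auto
  moreover have "(\<lambda>z. Max ((\<lambda>j. f j z) ` insert x F)) = (\<lambda>z. max (f x z) (Max ((\<lambda>j. f j z) ` F)))"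
    using insert by (simp add: Max_insert)
  ultimately show ?case by simp
qed

theorem lemma5:
  fixes T :: real
    and A :: "real \<Rightarrow> real^'n^'n"
    and B :: "real \<Rightarrow> real^'m^'n"
    and E :: "real \<Rightarrow> real^'l^'n"
    and U :: "(real^'m) set" and D :: "(real^'l) set"
    and g :: "real^'n \<Rightarrow> real"
    and N :: nat and nk :: "nat \<Rightarrow> nat"
    and \<gamma> :: "nat \<Rightarrow> real"
    and xb :: "nat \<Rightarrow> nat \<Rightarrow> real^'n" and p :: "nat \<Rightarrow> nat \<Rightarrow> real^'n"
    and lam :: "nat \<Rightarrow> nat \<Rightarrow> real \<Rightarrow> real^'n" and q :: "nat \<Rightarrow> nat \<Rightarrow> real \<Rightarrow> real"
    and v :: "real \<Rightarrow> real^'n \<Rightarrow> real"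
  assumes T: "T > 0"
    and A: "continuous_on {0..T} A" and B: "continuous_on {0..T} B" and E: "continuous_on {0..T} E"
    and U: "compact U" "convex U" "U \<noteq> {}"
    and D: "compact D" "convex D" "D \<noteq> {}"
    and g_cont: "continuous_on UNIV g"
    and g_convex: "convex_on UNIV g"
    and g_lip: "\<exists>L. L-lipschitz_on UNIV g"
    and N: "N \<ge> 1"
    and nk: "\<forall>k\<in>{1..N}. nk k \<ge> 1"
    and levels: "\<forall>k\<in>{1..N}. \<gamma> k \<in> range g"
    and pts: "\<forall>k\<in>{1..N}. \<forall>i\<in>{1..nk k}. g (xb i k) = \<gamma> k"
    and subgr: "\<forall>k\<in>{1..N}. \<forall>i\<in>{1..nk k}. p i k \<in> subdiff_lower g (xb i k)"
    and lam_ode: "\<forall>k\<in>{1..N}. \<forall>i\<in>{1..nk k}. \<forall>s\<in>{0..T}.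
        (lam i k has_vector_derivative (- (transpose (A s) *v lam i k s))) (at s within {0..T})"
    and q_ode: "\<forall>k\<in>{1..N}. \<forall>i\<in>{1..nk k}. \<forall>s\<in>{0..T}.
        (q i k has_real_derivative
           (SUP u\<in>U. INF d\<in>D. inner (- lam i k s) (B s *v u + E s *v d))) (at s within {0..T})"
    and lam_T: "\<forall>k\<in>{1..N}. \<forall>i\<in>{1..nk k}. lam i k T = p i k"
    and q_T: "\<forall>k\<in>{1..N}. \<forall>i\<in>{1..nk k}. q i k T = - inner (p i k) (xb i k) + \<gamma> k"
    and v_def: "\<forall>t x. v t x = Max {inner (lam i k t) x + q i k t | i k. k \<in> {1..N} \<and> i \<in> {1..nk k}}"
  shows "viscosity_subsolution T (hamiltonian A B E U D) v"
proof -
  define J where "J = Sigma {1..N} (\<lambda>k. {1..nk k})"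
  define Phi where "Phi j t x = inner (lam (snd j) (fst j) t) x + q (snd j) (fst j) t" for j t x
  have finJ: "finite J" unfolding J_def by auto
  have neJ: "J \<noteq> {}" using N nk unfolding J_def by force
  have vM: "v t x = Max ((\<lambda>j. Phi j t x) ` J)" for t x
  proof -
    have "{inner (lam i k t) x + q i k t | i k. k \<in> {1..N} \<and> i \<in> {1..nk k}} = (\<lambda>j. Phi j t x) ` J"
      unfolding J_def Phi_def by force
    thus ?thesis using v_def by simp
  qed
  have fv: "(\<lambda>(t,x). v t x) = (\<lambda>z. Max ((\<lambda>j. Phi j (fst z) (snd z)) ` J))"
    using vM by (auto simp: fun_eq_iff)
  have der: "((\<lambda>z. Phi j (fst z) (snd z)) has_derivative (\<lambda>h. inner
     ((SUP u\<in>U. INF d\<in>D. inner (- lam (snd j) (fst j) t0) (B t0 *v u + E t0 *v d))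
       + inner (- (transpose (A t0) *v lam (snd j) (fst j) t0)) x0, lam (snd j) (fst j) t0) h)) (at (t0,x0))"
    if j: "j \<in> J" and t0: "t0 \<in> {0<..<T}" for j t0 x0
  proof -
    obtain k i where ki: "j = (k,i)" "k \<in> {1..N}" "i \<in> {1..nk k}" using j unfolding J_def by auto
    have t0': "t0 \<in> {0..T}" "t0 \<in> interior {0..T}" using t0 by auto
    have l: "(lam i k has_vector_derivative (- (transpose (A t0) *v lam i k t0))) (at t0)"
      using lam_ode ki t0' at_within_interior[OF t0'(2)] by metis
    have qd: "(q i k has_real_derivative
           (SUP u\<in>U. INF d\<in>D. inner (- lam i k t0) (B t0 *v u + E t0 *v d))) (at t0)"
      using q_ode ki t0' at_within_interior[OF t0'(2)] by metis
    show ?thesis using deriv_phi[OF l qd, of x0] ki unfolding Phi_def by simp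
  qed
  show ?thesis
    unfolding viscosity_subsolution_def
  proof (intro conjI ballI allI)
    show "continuous_on ({0<..<T} \<times> UNIV) (\<lambda>(t, x). v t x)"
      unfolding fv
    proof (intro continuous_at_imp_continuous_on ballI)
      fix z :: "real \<times> (real^'n)" assume "z \<in> {0<..<T} \<times> UNIV"
      then obtain t0 x0 where z: "z = (t0,x0)" "t0 \<in> {0<..<T}" by auto
      show "isCont (\<lambda>z. Max ((\<lambda>j. Phi j (fst z) (snd z)) ` J)) z"
        using isCont_Max[OF finJ neJ, where f = "\<lambda>j z. Phi j (fst z) (snd z)" and z = z]
          has_derivative_continuous[OF der] z by blast
    qed
  next
    fix t0 x0 w
    assume t0: "t0 \<in> {0<..<T}" and w: "w \<in> superdiff_upper (\<lambda>(t, x). v t x) (t0, x0)"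
    obtain qq pp where wqp: "w = (qq,pp)" by (cases w)
    have "v t0 x0 \<in> (\<lambda>j. Phi j t0 x0) ` J" unfolding vM using finJ neJ by (intro Max_in) auto
    then obtain j where j: "j \<in> J" "Phi j t0 x0 = v t0 x0" by auto
    have le: "Phi j (fst z) (snd z) \<le> (\<lambda>(t, x). v t x) z" for z
      using j(1) finJ by (auto simp: vM split: prod.splits)
    have "w = ((SUP u\<in>U. INF d\<in>D. inner (- lam (snd j) (fst j) t0) (B t0 *v u + E t0 *v d))
       + inner (- (transpose (A t0) *v lam (snd j) (fst j) t0)) x0, lam (snd j) (fst j) t0)"
      by (rule super_eq_grad[OF der[OF j(1) t0, of x0] le _ w]) (use j(2) in simp)
    then show "case w of (q, p) \<Rightarrow> - q + hamiltonian A B E U D t0 x0 p \<le> 0"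
      by (simp add: dot_lmul_matrix ham_eq[OF U(1) U(3) D(1) D(3)])
  qed
qed


end
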